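(* For all positive integers $n$ and $\ell$, \begin{multline*} r(n,\ell+1)=\frac{-3n^2+3\ell^2-2n\ell-n+5\ell+2}{2(n+\ell+1)^2}+\frac{\ell^2+2n\ell+2n+3\ell}{n+\ell+1}2^{-n}+\frac{n^2+n+2}{2(n+\ell+1)}2^{-\ell}\\ +\frac{1}{4(n+\ell+1)}\sum_{k=1}^{\ell}\Big(4-\frac{2}{n+\ell+1}-2^{k-\ell}\Big)r(n,k) -\frac{n+\ell+2}{2(n+\ell+1)}\sum_{k=1}^{n}\Big(\frac{1}{n+\ell+1}-2^{k-n}\Big)r(k,\ell)\\ -\frac{1}{4(n+\ell+1)}\sum_{k=1}^{n}\sum_{j=1}^{\ell}\big(2^{1+k-n}-2^{j-\ell}\big)r(k,j). \end{multline*}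
   Context: For a directed graph with nonnegative adjacency matrix $A=[a_{i,j}]$ ($a_{i,j}>0$ iff there is an edge from $i$ to $j$), let $D$ be the diagonal matrix of out-degrees $d_k=\sum_j a_{k,j}$ and $L=D-A$. For a connected graph (one with a node reachable from every node) on $N$ nodes, let $\Pi=I_N-\frac1N\mathbf{1}_N\mathbf{1}_N^T$, $Q\in\mathbb{R}^{(N-1)\times N}$ with $Q\mathbf{1}_N=0$, $QQ^T=I_{N-1}$, $Q^TQ=\Pi$; $\overline L=QLQ^T$; $\Sigma$ the unique solution of $\overline L\Sigma+\Sigma\overline L^T=I_{N-1}$; $X=2Q^T\Sigma Q$; and the effective resistance $r_{k,j}=x_{k,k}+x_{j,j}-2x_{k,j}$. For integers $n,m\ge1$, $\mathcal{G}^{\mathrm{tree}}_{n,m}$ denotes the unit-weight directed tree with $n+m+1$ nodes formed by a directed path of $n$ edges from one leaf to a root and a directed path of $m$ edges from another leaf to the same root, and $r(n,m)$ denotes the effective resistance between its two leaves. *)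

theory Defs
  imports "Jordan_Normal_Form.Matrix" Complex_Main
begin

definition laplacian :: "real mat \<Rightarrow> real mat" where
  "laplacian A = mat (dim_row A) (dim_row A)
     (\<lambda>(i,j). (if i = j then (\<Sum>k<dim_row A. A $$ (i,k)) else 0) - A $$ (i,j))"

text \<open>Q is any (N-1) x N matrix with Q 1 = 0, Q Q^T = I, Q^T Q = Pi; the resistance does not
depend on the choice, we pick one via SOME. Sigma is the unique solution of the Lyapunov equation.\<close>
definition proj_Q :: "nat \<Rightarrow> real mat" where
  "proj_Q N = (SOME Q. Q \<in> carrier_mat (N - 1) N \<and> Q *\<^sub>v (vec N (\<lambda>_. 1)) = 0\<^sub>v (N - 1)
      \<and> Q * Q\<^sup>T = 1\<^sub>m (N - 1)
      \<and> Q\<^sup>T * Q = 1\<^sub>m N - (1 / real N) \<cdot>\<^sub>m mat N N (\<lambda>_. 1))"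

definition lyap_Sigma :: "real mat \<Rightarrow> real mat" where
  "lyap_Sigma Lb = (THE S. S \<in> carrier_mat (dim_row Lb) (dim_row Lb)
      \<and> Lb * S + S * Lb\<^sup>T = 1\<^sub>m (dim_row Lb))"

definition resistance_X :: "real mat \<Rightarrow> real mat" where
  "resistance_X A = (let N = dim_row A; Q = proj_Q N; Lb = Q * laplacian A * Q\<^sup>T
      in 2 \<cdot>\<^sub>m (Q\<^sup>T * lyap_Sigma Lb * Q))"

definition eff_res :: "real mat \<Rightarrow> nat \<Rightarrow> nat \<Rightarrow> real" where
  "eff_res A k j = (let X = resistance_X A in X $$ (k,k) + X $$ (j,j) - 2 * X $$ (k,j))"

text \<open>Tree G^tree_{n,m}: nodes 0..n+m, root 0; path n -> n-1 -> ... -> 1 -> 0 (n edges) and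
path n+m -> ... -> n+1 -> 0 (m edges); leaves n and n+m. Unit weights.\<close>
definition tree_adj :: "nat \<Rightarrow> nat \<Rightarrow> real mat" where
  "tree_adj n m = mat (n+m+1) (n+m+1) (\<lambda>(i,j).
      if (1 \<le> i \<and> i \<le> n \<and> j = i - 1) \<or> (1 \<le> m \<and> i = n + 1 \<and> j = 0)
         \<or> (n + 2 \<le> i \<and> i \<le> n + m \<and> j = i - 1) then 1 else 0)"

definition r :: "nat \<Rightarrow> nat \<Rightarrow> real" where
  "r n m = eff_res (tree_adj n m) n (n + m)"

end

theory Submission
  imports Defs
begin


fun Ff :: "nat \<Rightarrow> nat \<Rightarrow> real" where
  "Ff 0 b = 0"
| "Ff (Suc a) 0 = 0"
| "Ff (Suc a) (Suc b) = 1 + (Ff a (Suc b) + Ff (Suc a) b) / 2"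

lemma Ff_0r[simp]: "Ff a 0 = 0" by (cases a) auto

lemma Ff_sym: "Ff a b = Ff b a"
  by (induction a b rule: Ff.induct) auto

lemma Ff_SS: "2 * Ff (Suc a) (Suc b) = 2 + Ff a (Suc b) + Ff (Suc a) b"
  by simp

lemma sumU: "(\<Sum>k=1..b. 2^k * Ff a k) = 2^(b+1) * Ff (Suc a) b - 2^(b+2) + 4"
proof (induction b)
  case 0 then show ?case by simp
next
  case (Suc b)
  have "(\<Sum>k=1..Suc b. 2^k * Ff a k) = (\<Sum>k=1..b. 2^k * Ff a k) + 2^(Suc b) * Ff a (Suc b)"
    by simp
  also have "\<dots> = 2^(b+1) * Ff (Suc a) b - 2^(b+2) + 4 + 2^(Suc b) * Ff a (Suc b)"
    using Suc by simp
  also have "\<dots> = 2^(Suc b+1) * Ff (Suc a) (Suc b) - 2^(Suc b+2) + 4"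
    by (simp add: algebra_simps)
  finally show ?case .
qed

lemma sumU': "(\<Sum>k=1..a. 2^k * Ff k b) = 2^(a+1) * Ff a (Suc b) - 2^(a+2) + 4"
proof -
  have "(\<Sum>k=1..a. 2^k * Ff k b) = (\<Sum>k=1..a. 2^k * Ff b k)"
    by (rule sum.cong) (auto simp: Ff_sym[of _ b])
  also have "\<dots> = 2^(a+1) * Ff (Suc b) a - 2^(a+2) + 4" by (rule sumU)
  finally show ?thesis by (simp add: Ff_sym[of "Suc b" a])
qed

lemma Ff_1: "Ff 1 b = 2 - 2 / 2^b"
proof -
  have z: "(\<Sum>k=1..b. 2^k * Ff 0 k) = 0" by simp
  have "(0::real) = 2^(b+1) * Ff (Suc 0) b - 2^(b+2) + 4" using sumU[where a=0 and b=b] z by linarith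
  then show ?thesis by (simp add: field_simps)
qed

lemma Ff_1': "Ff a 1 = 2 - 2 / 2^a"
  using Ff_1 Ff_sym by metis

lemma T_step: "(\<Sum>k=1..l. Ff (Suc n) k) = 2 * real l + (\<Sum>k=1..l. Ff n k) - Ff (Suc n) l"
proof (induction l)
  case 0 then show ?case by simp
next
  case (Suc l)
  then show ?case by (simp add: field_simps)
qed

lemma TU: "(\<Sum>k=1..l. Ff n k) + (\<Sum>k=1..n. Ff k l) = 2 * real n * real l"
proof (induction n)
  case 0 then show ?case by simp
next
  case (Suc n)
  have "(\<Sum>k=1..Suc n. Ff k l) = (\<Sum>k=1..n. Ff k l) + Ff (Suc n) l" by simp
  then show ?case using Suc T_step[where l=l and n=n] by (simp add: algebra_simps)
qed

lemma geo1: "(\<Sum>k=1..l. (2::real)^k) = 2^(l+1) - 2"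
  by (induction l) auto

lemma geo2: "(\<Sum>k=1..l. real k * (2::real)^k) = (real l - 1) * 2^(l+1) + 2"
  by (induction l) (auto simp: algebra_simps)

lemma ar1: "(\<Sum>k=1..l. real k) = real l * (real l + 1) / 2"
  by (induction l) (auto simp: field_simps)


lemma final_alg:
  fixes x y p q T F1 F2 s :: real
  assumes hs: "y = s - x - 1" and "p > 0" "q > 0" "x \<ge> 0" "y \<ge> 0"
  shows "2 * x + 2 * (y + 1) - 2 * F1 =
      (- 3 * x ^ 2 + 3 * y ^ 2 - 2 * x * y - x + 5 * y + 2) / (2 * s ^ 2)
    + (y ^ 2 + 2 * x * y + 2 * x + 3 * y) / s * (1 / p)
    + (x ^ 2 + x + 2) / (2 * s) * (1 / q)
    + 1 / (4 * s) *
       ((4 - 2 / s) * (2 * x * y + 2 * (y * (y + 1) / 2) - 2 * T)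
       - (1/q) * (2 * x * (2 * q - 2) + 2 * ((y - 1) * (2 * q) + 2) - 2 * (2 * q * F2 - 4 * q + 4)))
    - (x + y + 2) / (2 * s) *
       ((1 / s) * (2 * y * x + 2 * (x * (x + 1) / 2) - 2 * (2 * x * y - T))
       - (1/p) * (2 * y * (2 * p - 2) + 2 * ((x - 1) * (2 * p) + 2) - 2 * (2 * p * F1 - 4 * p + 4)))
    - 1 / (4 * s) *
       ((2/p) * ((2 * y * ((x - 1) * (2 * p) + 2) + y * (y + 1) * (2 * p - 2))
                 - 2 * (2 * p * (T + F1 - (2 - 2 / p)) - y * (4 * p - 4)))
      - (1/q) * ((x * (x + 1) * (2 * q - 2) + 2 * x * ((y - 1) * (2 * q) + 2))
                 - 2 * (2 * q * ((2 * x * y - T) + F2 - (2 - 2 / q)) - x * (4 * q - 4))))"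
proof -
  have N: "s > 0" using assms by (simp add: hs)
  have "s \<noteq> 0" "p \<noteq> 0" "q \<noteq> 0" using N assms by auto
  then show ?thesis unfolding hs
    by (simp add: field_simps power2_eq_square) algebra
qed


lemma mult_entry:
  assumes "A \<in> carrier_mat a b" "B \<in> carrier_mat b c" "i < a" "j < c"
  shows "(A * B) $$ (i,j) = (\<Sum>k<b. A $$ (i,k) * B $$ (k,j))"
  using assms by (auto simp: scalar_prod_def atLeast0LessThan intro!: sum.cong)

definition hc :: "nat \<Rightarrow> real" where "hc k = 1 / sqrt ((real k + 1) * (real k + 2))"
definition hq :: "nat \<Rightarrow> nat \<Rightarrow> real" where
  "hq k j = (if j \<le> k then hc k else if j = k + 1 then - (real k + 1) * hc k else 0)"
definition hel :: "nat \<Rightarrow> real mat" where "hel N = mat (N - 1) N (\<lambda>(k,j). hq k j)"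

lemma hc_sq: "hc k * hc k = 1 / ((real k + 1) * (real k + 2))"
proof -
  have "(real k + 1) * (real k + 2) > 0" by simp
  then show ?thesis unfolding hc_def
    by (simp add: divide_simps)
qed

lemma sum_cut: fixes k N :: nat assumes "k \<le> N" "\<And>j. k \<le> j \<Longrightarrow> f j = 0"
  shows "(\<Sum>j<N. f j) = (\<Sum>j<k. (f j :: real))"
proof -
  have "(\<Sum>j<N. f j) = (\<Sum>j\<in>{0..<k}. f j) + (\<Sum>j\<in>{k..<N}. f j)"
    using assms sum.atLeastLessThan_concat[of 0 k N f] by (simp add: lessThan_atLeast0)
  also have "(\<Sum>j\<in>{k..<N}. f j) = 0" by (rule sum.neutral) (use assms in auto)
  finally show ?thesis by (simp add: lessThan_atLeast0)
qed

lemma hq_rowsum: "(\<Sum>j<k+2. hq k j) = 0"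
proof -
  have "(\<Sum>j<k+2. hq k j) = (\<Sum>j<k+1. hq k j) + hq k (k+1)" by simp
  also have "(\<Sum>j<k+1. hq k j) = (\<Sum>j<k+1. hc k)" by (rule sum.cong) (auto simp: hq_def)
  finally show ?thesis by (simp add: hq_def algebra_simps)
qed

lemma hq_rowsum': "k + 1 < N \<Longrightarrow> (\<Sum>j<N. hq k j) = 0"
  using sum_cut[of "k+2" N "hq k"] hq_rowsum[of k] by (auto simp: hq_def)

lemma hq_self: "(\<Sum>j<k+2. hq k j * hq k j) = 1"
proof -
  have "(\<Sum>j<k+2. hq k j * hq k j) = (\<Sum>j<k+1. hq k j * hq k j) + hq k (k+1) * hq k (k+1)" by simp
  also have "(\<Sum>j<k+1. hq k j * hq k j) = (\<Sum>j<k+1. hc k * hc k)" by (rule sum.cong) (auto simp: hq_def)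
  also have "hq k (k+1) * hq k (k+1) = (real k + 1)^2 * (hc k * hc k)" by (simp add: hq_def power2_eq_square algebra_simps)
  also have "(\<Sum>j<k+1. hc k * hc k) = (real k + 1) * (hc k * hc k)" by simp
  finally have e: "(\<Sum>j<k+2. hq k j * hq k j) = (real k + 1) * (hc k * hc k) + (real k + 1)^2 * (hc k * hc k)" .
  have d: "(real k+1)*(real k+2) \<noteq> 0" by simp
  have s: "(real k + 1) + (real k+1)^2 = (real k+1)*(real k+2)" by (simp add: power2_eq_square algebra_simps)
  have "(real k + 1) * (hc k * hc k) + (real k + 1)^2 * (hc k * hc k) = ((real k + 1) + (real k+1)^2) * (hc k * hc k)"
    by (simp only: distrib_right)
  also have "\<dots> = 1" unfolding s hc_sq using d by simp
  finally show ?thesis unfolding e .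
qed

lemma hq_self': "k + 1 < N \<Longrightarrow> (\<Sum>j<N. hq k j * hq k j) = 1"
  using sum_cut[of "k+2" N "\<lambda>j. hq k j * hq k j"] hq_self[of k] by (auto simp: hq_def)

lemma hq_orth: assumes "k < k'" "k' + 1 < N" shows "(\<Sum>j<N. hq k j * hq k' j) = 0"
proof -
  have "(\<Sum>j<N. hq k j * hq k' j) = (\<Sum>j<k+2. hq k j * hq k' j)"
    by (rule sum_cut) (use assms in \<open>auto simp: hq_def\<close>)
  also have "\<dots> = (\<Sum>j<k+2. hc k' * hq k j)" by (rule sum.cong) (use assms in \<open>auto simp: hq_def\<close>)
  also have "\<dots> = hc k' * (\<Sum>j<k+2. hq k j)" by (simp only: sum_distrib_left)
  finally show ?thesis using hq_rowsum by simp
qed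

lemma tel: "a \<le> b \<Longrightarrow> (\<Sum>k\<in>{a..<b}. 1/((real k+1)*(real k+2))) = 1/(real a+1) - 1/(real b+1)"
proof (induction b)
  case 0 then show ?case by simp
next
  case (Suc b)
  show ?case
  proof (cases "a = Suc b")
    case True then show ?thesis by simp
  next
    case False
    then have ab: "a \<le> b" using Suc by simp
    have e: "1/((real b+1)*(real b+2)) = 1/(real b+1) - 1/(real b+2)" by (simp add: field_simps)
    have "(\<Sum>k\<in>{a..<Suc b}. 1/((real k+1)*(real k+2))) = (\<Sum>k\<in>{a..<b}. 1/((real k+1)*(real k+2))) + 1/((real b+1)*(real b+2))"
      using ab by simp
    then show ?thesis using Suc.IH[OF ab] e by simp
  qed
qed

lemma hq_col: assumes "i \<le> j" "j < N" "N \<ge> 1"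
  shows "(\<Sum>k<N-1. hq k i * hq k j) = (if i = j then 1 else 0) - 1 / real N"
proof (cases "j = 0")
  case True
  then have i0: "i = 0" using assms by simp
  have "(\<Sum>k<N-1. hq k i * hq k j) = (\<Sum>k\<in>{0..<N-1}. 1/((real k+1)*(real k+2)))"
    by (rule sum.cong) (auto simp: True i0 hq_def hc_sq)
  also have "\<dots> = 1 - 1 / real N" using tel[of 0 "N-1"] assms by (simp add: of_nat_diff)
  finally show ?thesis using True i0 by simp
next
  case jn: False
  have "(\<Sum>k<N-1. hq k i * hq k j) = (\<Sum>k\<in>{0..<j-1}. hq k i * hq k j) + (\<Sum>k\<in>{j-1..<N-1}. hq k i * hq k j)"
    using assms jn by (simp add: lessThan_atLeast0 sum.atLeastLessThan_concat)
  also have "(\<Sum>k\<in>{0..<j-1}. hq k i * hq k j) = 0"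
    by (rule sum.neutral) (auto simp: hq_def)
  also have "{j-1..<N-1} = insert (j-1) {j..<N-1}" using assms jn by auto
  also have "(\<Sum>k\<in>insert (j-1) {j..<N-1}. hq k i * hq k j) = hq (j-1) i * hq (j-1) j + (\<Sum>k\<in>{j..<N-1}. hq k i * hq k j)"
    by (rule sum.insert) (use jn in auto)
  also have "(\<Sum>k\<in>{j..<N-1}. hq k i * hq k j) = (\<Sum>k\<in>{j..<N-1}. 1/((real k+1)*(real k+2)))"
    by (rule sum.cong) (use assms in \<open>auto simp: hq_def hc_sq\<close>)
  also have "\<dots> = 1/(real j+1) - 1/real N" using tel[of j "N-1"] assms by (simp add: of_nat_diff)
  also have "hq (j-1) i * hq (j-1) j = (if i = j then real j / (real j + 1) else - 1 / (real j + 1))"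
  proof -
    have jj: "real (j - 1) = real j - 1" using jn by (simp add: of_nat_diff)
    have h: "hc (j-1) * hc (j-1) = 1 / (real j * (real j + 1))" unfolding hc_sq jj by (simp add: algebra_simps)
    have a1: "\<not> j \<le> j - 1" "j = j - 1 + 1" using jn by auto
    have "hq (j-1) j = - real j * hc (j-1)" using a1 unfolding hq_def jj by simp
    moreover have "hq (j-1) i = (if i = j then - real j * hc (j-1) else hc (j-1))"
    proof (cases "i = j")
      case True then show ?thesis using a1 unfolding hq_def jj by simp
    next
      case False then have "i \<le> j - 1" using assms by simp
      then show ?thesis using False unfolding hq_def by simp
    qed
    ultimately have e: "hq (j-1) i * hq (j-1) j = (if i = j then real j * real j else - real j) * (hc (j-1) * hc (j-1))"
      by (auto simp: algebra_simps)
    have jp: "real j > 0" using jn by simp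
    have jq: "real j + real j * real j \<noteq> 0" using jp by (metis add_pos_pos less_irrefl mult_pos_pos)
    have c1: "real j * real j * (1 / (real j * (real j + 1))) = real j / (real j + 1)"
      using jp by (simp add: divide_simps)
    have c2: "- real j * (1 / (real j * (real j + 1))) = - 1 / (real j + 1)"
      using jp by (simp add: divide_simps)
    show ?thesis unfolding e h using c1 c2 by auto
  qed
  finally have F: "(\<Sum>k<N-1. hq k i * hq k j) = 0 + ((if i = j then real j / (real j + 1) else - 1 / (real j + 1)) + (1/(real j+1) - 1/real N))" .
  have jp: "real j + 1 > 0" by simp
  have "real j / (real j + 1) + 1 / (real j + 1) = 1" using jp by (simp add: divide_simps)
  then show ?thesis
  proof (cases "i = j")
    case True then show ?thesis using F \<open>real j / (real j + 1) + 1 / (real j + 1) = 1\<close> by simp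
  next
    case False
    have "- 1 / (real j + 1) = - (1 / (real j + 1))" by simp
    then show ?thesis using False F by simp
  qed
qed

lemma hel_props:
  assumes "N \<ge> 1"
  shows "hel N \<in> carrier_mat (N - 1) N \<and> hel N *\<^sub>v (vec N (\<lambda>_. 1)) = 0\<^sub>v (N - 1)
      \<and> hel N * (hel N)\<^sup>T = 1\<^sub>m (N - 1)
      \<and> (hel N)\<^sup>T * hel N = 1\<^sub>m N - (1 / real N) \<cdot>\<^sub>m mat N N (\<lambda>_. 1)"
proof (intro conjI)
  show C: "hel N \<in> carrier_mat (N - 1) N" unfolding hel_def by simp
  show "hel N *\<^sub>v (vec N (\<lambda>_. 1)) = 0\<^sub>v (N - 1)"
  proof (rule eq_vecI)
    fix k assume k: "k < dim_vec (0\<^sub>v (N - 1) :: real vec)"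
    have "(hel N *\<^sub>v vec N (\<lambda>_. 1)) $ k = (\<Sum>j<N. hq k j)"
      using k unfolding hel_def by (auto simp: scalar_prod_def atLeast0LessThan intro!: sum.cong)
    then show "(hel N *\<^sub>v vec N (\<lambda>_. 1)) $ k = 0\<^sub>v (N - 1) $ k"
      using k hq_rowsum'[of k N] by simp
  qed (simp add: hel_def)
  show "hel N * (hel N)\<^sup>T = 1\<^sub>m (N - 1)"
  proof (rule eq_matI)
    fix k k' assume kk: "k < dim_row (1\<^sub>m (N - 1) :: real mat)" "k' < dim_col (1\<^sub>m (N - 1) :: real mat)"
    have "(hel N * (hel N)\<^sup>T) $$ (k,k') = (\<Sum>j<N. hq k j * hq k' j)"
      using kk by (subst mult_entry[OF C]) (auto simp: hel_def intro!: sum.cong)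
    also have "\<dots> = (if k = k' then 1 else 0)"
    proof -
      consider "k = k'" | "k < k'" | "k' < k" by linarith
      then show ?thesis
      proof cases
        case 1 then show ?thesis using kk hq_self'[of k N] by simp
      next
        case 2 then show ?thesis using kk hq_orth[of k k' N] by simp
      next
        case 3 then show ?thesis using kk hq_orth[of k' k N] by (simp add: mult.commute)
      qed
    qed
    finally show "(hel N * (hel N)\<^sup>T) $$ (k,k') = 1\<^sub>m (N - 1) $$ (k,k')" using kk by simp
  qed (auto simp: hel_def)
  show "(hel N)\<^sup>T * hel N = 1\<^sub>m N - (1 / real N) \<cdot>\<^sub>m mat N N (\<lambda>_. 1)"
  proof (rule eq_matI)
    fix i j assume ij: "i < dim_row (1\<^sub>m N - (1 / real N) \<cdot>\<^sub>m mat N N (\<lambda>_. 1) :: real mat)"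
      "j < dim_col (1\<^sub>m N - (1 / real N) \<cdot>\<^sub>m mat N N (\<lambda>_. 1) :: real mat)"
    have "((hel N)\<^sup>T * hel N) $$ (i,j) = (\<Sum>k<N-1. hq k i * hq k j)"
      using ij C by (subst mult_entry[of _ N "N-1" _ N]) (auto simp: hel_def intro!: sum.cong)
    also have "\<dots> = (if i = j then 1 else 0) - 1 / real N"
    proof (cases "i \<le> j")
      case True then show ?thesis using ij hq_col[of i j N] assms by simp
    next
      case False
      have "(\<Sum>k<N-1. hq k i * hq k j) = (\<Sum>k<N-1. hq k j * hq k i)" by (simp add: mult.commute)
      then show ?thesis using False ij hq_col[of j i N] assms by simp
    qed
    finally show "((hel N)\<^sup>T * hel N) $$ (i,j) = (1\<^sub>m N - (1 / real N) \<cdot>\<^sub>m mat N N (\<lambda>_. 1)) $$ (i,j)"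
      using ij by simp
  qed (auto simp: hel_def)
qed

lemma proj_Q_props:
  assumes "N \<ge> 1"
  shows "proj_Q N \<in> carrier_mat (N - 1) N \<and> proj_Q N *\<^sub>v (vec N (\<lambda>_. 1)) = 0\<^sub>v (N - 1)
      \<and> proj_Q N * (proj_Q N)\<^sup>T = 1\<^sub>m (N - 1)
      \<and> (proj_Q N)\<^sup>T * proj_Q N = 1\<^sub>m N - (1 / real N) \<cdot>\<^sub>m mat N N (\<lambda>_. 1)"
  unfolding proj_Q_def by (rule someI_ex, rule exI, rule hel_props[OF assms])


lemma assoc': assumes "dim_col A = dim_row B" "dim_col B = dim_row C"
  shows "(A * B) * C = A * (B * (C :: 'a::semiring_0 mat))"
proof -
  have "A \<in> carrier_mat (dim_row A) (dim_col A)" "B \<in> carrier_mat (dim_col A) (dim_col B)"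
    "C \<in> carrier_mat (dim_col B) (dim_col C)" using assms by (auto intro!: carrier_matI)
  then show ?thesis by (rule assoc_mult_mat)
qed
lemma transpose_mult': assumes "dim_col A = dim_row B"
  shows "(A * B)\<^sup>T = B\<^sup>T * (A\<^sup>T :: 'a::comm_semiring_0 mat)"
proof -
  have "A \<in> carrier_mat (dim_row A) (dim_col A)" "B \<in> carrier_mat (dim_col A) (dim_col B)"
    using assms by (auto intro!: carrier_matI)
  then show ?thesis by (rule transpose_mult)
qed
lemma distl': assumes "dim_col A = dim_row B" "dim_row B = dim_row C" "dim_col B = dim_col C"
  shows "A * (B + C) = A * B + A * (C :: 'a::semiring_0 mat)"
proof -
  have "A \<in> carrier_mat (dim_row A) (dim_col A)" "B \<in> carrier_mat (dim_col A) (dim_col B)"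
    "C \<in> carrier_mat (dim_col A) (dim_col B)" using assms by (auto intro!: carrier_matI)
  then show ?thesis by (rule mult_add_distrib_mat)
qed
lemma distr': assumes "dim_row A = dim_row B" "dim_col A = dim_col B" "dim_col A = dim_row C"
  shows "(A + B) * C = A * C + B * (C :: 'a::semiring_0 mat)"
proof -
  have "A \<in> carrier_mat (dim_row A) (dim_col A)" "B \<in> carrier_mat (dim_row A) (dim_col A)"
    "C \<in> carrier_mat (dim_col A) (dim_col C)" using assms by (auto intro!: carrier_matI)
  then show ?thesis by (rule add_mult_distrib_mat)
qed

definition par :: "nat \<Rightarrow> nat \<Rightarrow> nat" where "par n i = (if i = n + 1 then 0 else i - 1)"
definition dep :: "nat \<Rightarrow> nat \<Rightarrow> nat" where "dep n i = (if i \<le> n then i else i - n)"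
definition Wf :: "bool \<Rightarrow> nat \<Rightarrow> nat \<Rightarrow> real" where
  "Wf s x y = (if s then real (min x y) else Ff x y / 2)"
definition Wv :: "nat \<Rightarrow> nat \<Rightarrow> nat \<Rightarrow> real" where
  "Wv n i j = Wf ((i \<le> n) = (j \<le> n)) (dep n i) (dep n j)"

lemma Wf_0[simp]: "Wf s 0 y = 0" "Wf s x 0 = 0" by (auto simp: Wf_def)

lemma Wf_sym: "Wf s x y = Wf s y x" by (auto simp: Wf_def Ff_sym[of x y])

lemma Wf_rec: assumes "1 \<le> x" "1 \<le> y"
  shows "2 * Wf s x y - Wf s (x-1) y - Wf s x (y-1) = 1 + (if s \<and> x = y then 1 else 0)"
proof (cases s)
  case True
  have x1: "real (x - 1) = real x - 1" and y1: "real (y - 1) = real y - 1" using assms by (auto simp: of_nat_diff)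
  consider "x < y" | "x = y" | "y < x" by linarith
  then show ?thesis
  proof cases
    case 1
    then have "min x y = x" "min (x-1) y = x - 1" "min x (y-1) = x" by auto
    then show ?thesis using True 1 x1 unfolding Wf_def by simp
  next
    case 2
    then have "min x y = x" "min (x-1) y = x - 1" "min x (y-1) = x - 1" by auto
    then show ?thesis using True 2 x1 unfolding Wf_def by simp
  next
    case 3
    then have "min x y = y" "min (x-1) y = y" "min x (y-1) = y - 1" by auto
    then show ?thesis using True 3 y1 unfolding Wf_def by simp
  qed
next
  case False
  obtain a b where ab: "x = Suc a" "y = Suc b" using assms by (metis Suc_le_D One_nat_def)
  show ?thesis using False unfolding ab Wf_def by (simp add: field_simps)
qed

lemma dep_pos: "1 \<le> i \<Longrightarrow> 1 \<le> dep n i" by (auto simp: dep_def)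
lemma dep_0[simp]: "dep n 0 = 0" by (simp add: dep_def)
lemma dep_par: "1 \<le> i \<Longrightarrow> dep n (par n i) = dep n i - 1" by (auto simp: dep_def par_def)
lemma par_lt: "1 \<le> i \<Longrightarrow> par n i < i" by (auto simp: par_def)

lemma Wv_0[simp]: "Wv n 0 j = 0" "Wv n i 0 = 0" by (auto simp: Wv_def)

lemma Wv_sym: "Wv n i j = Wv n j i"
proof -
  have e: "((j \<le> n) = (i \<le> n)) = ((i \<le> n) = (j \<le> n))" by auto
  have "Wf ((i \<le> n) = (j \<le> n)) (dep n i) (dep n j) = Wf ((i \<le> n) = (j \<le> n)) (dep n j) (dep n i)" by (rule Wf_sym)
  then show ?thesis unfolding Wv_def e .
qed

lemma Wv_par1: assumes "1 \<le> i" shows "Wv n (par n i) j = Wf ((i \<le> n) = (j \<le> n)) (dep n i - 1) (dep n j)"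
proof (cases "par n i = 0")
  case True
  then have "dep n i - 1 = 0" using dep_par[OF assms, of n] by simp
  then show ?thesis using True by simp
next
  case False
  then have "(par n i \<le> n) = (i \<le> n)" using assms by (auto simp: par_def)
  then show ?thesis unfolding Wv_def using dep_par[OF assms, of n] by simp
qed

lemma Wv_par2: assumes "1 \<le> j" shows "Wv n i (par n j) = Wf ((i \<le> n) = (j \<le> n)) (dep n i) (dep n j - 1)"
proof -
  have e: "((j \<le> n) = (i \<le> n)) = ((i \<le> n) = (j \<le> n))" by auto
  have "Wv n i (par n j) = Wv n (par n j) i" by (rule Wv_sym)
  also have "\<dots> = Wf ((j \<le> n) = (i \<le> n)) (dep n j - 1) (dep n i)" by (rule Wv_par1[OF assms])
  also have "\<dots> = Wf ((i \<le> n) = (j \<le> n)) (dep n i) (dep n j - 1)" unfolding e by (rule Wf_sym)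
  finally show ?thesis .
qed

lemma eq_iff_dep: "1 \<le> i \<Longrightarrow> 1 \<le> j \<Longrightarrow> (i = j) = ((i \<le> n) = (j \<le> n) \<and> dep n i = dep n j)"
  by (auto simp: dep_def)

lemma Wv_rec: assumes "1 \<le> i" "1 \<le> j"
  shows "2 * Wv n i j - Wv n (par n i) j - Wv n i (par n j) = 1 + (if i = j then 1 else 0)"
proof -
  have B: "(((i \<le> n) = (j \<le> n)) \<and> dep n i = dep n j) = (i = j)" using eq_iff_dep[OF assms, of n] by simp
  show ?thesis
    using Wf_rec[OF dep_pos[OF assms(1)] dep_pos[OF assms(2)], of "(i \<le> n) = (j \<le> n)" n n]
    unfolding B Wv_par1[OF assms(1)] Wv_par2[OF assms(2)] Wv_def[of n i j] .
qed

declare sum.lessThan_Suc[simp del]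

context
  fixes n m :: nat
  assumes m1: "1 \<le> m"
begin

abbreviation "NN \<equiv> n + m + 1"
abbreviation "LL \<equiv> laplacian (tree_adj n m)"
abbreviation "PP \<equiv> mat NN NN (\<lambda>(i,j). (if i = j then 1 else 0) - (if j = 0 then 1 else 0) :: real)"
abbreviation "BB \<equiv> mat NN NN (\<lambda>(i,j). (if i = j then 1 else 0) - (if i = 0 then 1 else 0) - (if j = 0 then 1 else 0) + 1 :: real)"
abbreviation "PI \<equiv> 1\<^sub>m NN - (1 / real NN) \<cdot>\<^sub>m mat NN NN (\<lambda>_. 1 :: real)"
abbreviation "WW \<equiv> mat NN NN (\<lambda>(i,j). Wv n i j)"

lemma par_ltN: "i < NN \<Longrightarrow> par n i < NN" by (auto simp: par_def)

lemma adj_dim[simp]: "dim_row (tree_adj n m) = NN" "dim_col (tree_adj n m) = NN"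
  by (auto simp: tree_adj_def)

lemma adj_entry: "i < NN \<Longrightarrow> j < NN \<Longrightarrow> tree_adj n m $$ (i,j) = (if 1 \<le> i \<and> j = par n i then 1 else 0)"
  using m1 unfolding tree_adj_def par_def by auto

lemma L_dim[simp]: "dim_row LL = NN" "dim_col LL = NN" by (auto simp: laplacian_def)
lemma L_carrier: "LL \<in> carrier_mat NN NN" by (intro carrier_matI) simp_all

lemma L_entry: assumes "i < NN" "j < NN"
  shows "LL $$ (i,j) = (if i = j \<and> 1 \<le> i then 1 else 0) - (if 1 \<le> i \<and> j = par n i then 1 else 0)"
proof -
  have "(\<Sum>k<NN. tree_adj n m $$ (i,k)) = (\<Sum>k<NN. if k = par n i then (if 1 \<le> i then 1 else 0) else 0)"
    by (rule sum.cong) (use assms in \<open>auto simp: adj_entry\<close>)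
  also have "\<dots> = (if 1 \<le> i then 1 else 0)" using par_ltN[of i] assms by (simp add: sum.delta)
  finally show ?thesis unfolding laplacian_def using assms par_ltN[of i] par_ltN[of j] by (simp add: adj_entry)
qed

lemma L_rowsum: "i < NN \<Longrightarrow> (\<Sum>k<NN. LL $$ (i,k)) = 0"
proof -
  assume i: "i < NN"
  have "(\<Sum>k<NN. LL $$ (i,k)) = (\<Sum>k<NN. (if k = i then (if 1 \<le> i then 1 else 0) else 0) - (if k = par n i then (if 1 \<le> i then 1 else 0) else 0))"
    by (rule sum.cong) (use i in \<open>auto simp: L_entry\<close>)
  also have "\<dots> = 0" using i par_ltN[of i] by (simp add: sum_subtractf sum.delta)
  finally show ?thesis .
qed

lemma L_row0: "j < NN \<Longrightarrow> LL $$ (0,j) = 0" by (simp add: L_entry)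

lemma LZ: assumes "Z \<in> carrier_mat NN NN" "i < NN" "j < NN"
  shows "(LL * Z) $$ (i,j) = (if 1 \<le> i then Z $$ (i,j) - Z $$ (par n i, j) else 0)"
proof -
  have "(LL * Z) $$ (i,j) = (\<Sum>k<NN. LL $$ (i,k) * Z $$ (k,j))"
    using assms by (intro mult_entry[OF L_carrier]) auto
  also have "\<dots> = (\<Sum>k<NN. (if k = i then (if 1 \<le> i then Z $$ (k,j) else 0) else 0) - (if k = par n i then (if 1 \<le> i then Z $$ (k,j) else 0) else 0))"
    by (rule sum.cong) (use assms in \<open>auto simp: L_entry\<close>)
  also have "\<dots> = (if 1 \<le> i then Z $$ (i,j) - Z $$ (par n i, j) else 0)"
    using assms par_ltN[of i] by (simp add: sum_subtractf sum.delta)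
  finally show ?thesis .
qed

lemma ZLt: assumes "Z \<in> carrier_mat NN NN" "i < NN" "j < NN"
  shows "(Z * LL\<^sup>T) $$ (i,j) = (if 1 \<le> j then Z $$ (i,j) - Z $$ (i, par n j) else 0)"
proof -
  have "(Z * LL\<^sup>T) $$ (i,j) = (\<Sum>k<NN. Z $$ (i,k) * LL\<^sup>T $$ (k,j))"
    using assms by (intro mult_entry[OF assms(1)]) (auto intro!: carrier_matI)
  also have "\<dots> = (\<Sum>k<NN. (if k = j then (if 1 \<le> j then Z $$ (i,k) else 0) else 0) - (if k = par n j then (if 1 \<le> j then Z $$ (i,k) else 0) else 0))"
    by (rule sum.cong) (use assms in \<open>auto simp: L_entry\<close>)
  also have "\<dots> = (if 1 \<le> j then Z $$ (i,j) - Z $$ (i, par n j) else 0)"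
    using assms par_ltN[of j] by (simp add: sum_subtractf sum.delta)
  finally show ?thesis .
qed


lemma PPc: "PP \<in> carrier_mat NN NN" by (intro carrier_matI) simp_all
lemma PIc: "PI \<in> carrier_mat NN NN" by (intro carrier_matI) simp_all
lemma WWc: "WW \<in> carrier_mat NN NN" by (intro carrier_matI) simp_all
lemma PPtc: "PP\<^sup>T \<in> carrier_mat NN NN" by (intro carrier_matI) simp_all
lemma Ltc: "LL\<^sup>T \<in> carrier_mat NN NN" by (intro carrier_matI) simp_all

lemma M_P: assumes "M \<in> carrier_mat a NN" "i < a" "j < NN"
  shows "(M * PP) $$ (i,j) = M $$ (i,j) - (if j = 0 then (\<Sum>k<NN. M $$ (i,k)) else 0)"
proof -
  have "(M * PP) $$ (i,j) = (\<Sum>k<NN. M $$ (i,k) * PP $$ (k,j))"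
    using assms by (intro mult_entry[OF assms(1) PPc]) auto
  also have "\<dots> = (\<Sum>k<NN. (if k = j then M $$ (i,k) else 0) - (if j = 0 then M $$ (i,k) else 0))"
    by (rule sum.cong) (use assms in auto)
  also have "\<dots> = M $$ (i,j) - (if j = 0 then (\<Sum>k<NN. M $$ (i,k)) else 0)"
    using assms by (cases "j = 0") (simp_all add: sum_subtractf sum.delta)
  finally show ?thesis .
qed

lemma P_M: assumes "M \<in> carrier_mat NN b" "i < NN" "j < b"
  shows "(PP * M) $$ (i,j) = M $$ (i,j) - M $$ (0,j)"
proof -
  have "(PP * M) $$ (i,j) = (\<Sum>k<NN. PP $$ (i,k) * M $$ (k,j))"
    using assms by (intro mult_entry[OF PPc assms(1)]) auto
  also have "\<dots> = (\<Sum>k<NN. (if k = i then M $$ (k,j) else 0) - (if k = 0 then M $$ (k,j) else 0))"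
    by (rule sum.cong) (use assms in auto)
  also have "\<dots> = M $$ (i,j) - M $$ (0,j)"
    using assms by (simp add: sum_subtractf sum.delta)
  finally show ?thesis .
qed

lemma M_Pt: assumes "M \<in> carrier_mat a NN" "i < a" "j < NN"
  shows "(M * PP\<^sup>T) $$ (i,j) = M $$ (i,j) - M $$ (i,0)"
proof -
  have "(M * PP\<^sup>T) $$ (i,j) = (\<Sum>k<NN. M $$ (i,k) * PP\<^sup>T $$ (k,j))"
    using assms by (intro mult_entry[OF assms(1) PPtc]) auto
  also have "\<dots> = (\<Sum>k<NN. (if k = j then M $$ (i,k) else 0) - (if k = 0 then M $$ (i,k) else 0))"
    by (rule sum.cong) (use assms in auto)
  also have "\<dots> = M $$ (i,j) - M $$ (i,0)"
    using assms by (simp add: sum_subtractf sum.delta)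
  finally show ?thesis .
qed

lemma Pt_M: assumes "M \<in> carrier_mat NN b" "i < NN" "j < b"
  shows "(PP\<^sup>T * M) $$ (i,j) = M $$ (i,j) - (if i = 0 then (\<Sum>k<NN. M $$ (k,j)) else 0)"
proof -
  have "(PP\<^sup>T * M) $$ (i,j) = (\<Sum>k<NN. PP\<^sup>T $$ (i,k) * M $$ (k,j))"
    using assms by (intro mult_entry[OF PPtc assms(1)]) auto
  also have "\<dots> = (\<Sum>k<NN. (if k = i then M $$ (k,j) else 0) - (if i = 0 then M $$ (k,j) else 0))"
    by (rule sum.cong) (use assms in auto)
  also have "\<dots> = M $$ (i,j) - (if i = 0 then (\<Sum>k<NN. M $$ (k,j)) else 0)"
    using assms by (cases "i = 0") (simp_all add: sum_subtractf sum.delta)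
  finally show ?thesis .
qed

lemma M_PI: assumes "M \<in> carrier_mat a NN" "i < a" "j < NN"
  shows "(M * PI) $$ (i,j) = M $$ (i,j) - (1 / real NN) * (\<Sum>k<NN. M $$ (i,k))"
proof -
  have "(M * PI) $$ (i,j) = (\<Sum>k<NN. M $$ (i,k) * PI $$ (k,j))"
    using assms by (intro mult_entry[OF assms(1) PIc]) auto
  also have "\<dots> = (\<Sum>k<NN. (if k = j then M $$ (i,k) else 0) - (1 / real NN) * M $$ (i,k))"
    by (rule sum.cong) (use assms in \<open>auto simp: algebra_simps\<close>)
  also have "\<dots> = M $$ (i,j) - (1 / real NN) * (\<Sum>k<NN. M $$ (i,k))"
    using assms by (simp add: sum_subtractf sum.delta sum_distrib_left)
  finally show ?thesis .
qed

lemma PI_M: assumes "M \<in> carrier_mat NN b" "i < NN" "j < b"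
  shows "(PI * M) $$ (i,j) = M $$ (i,j) - (1 / real NN) * (\<Sum>k<NN. M $$ (k,j))"
proof -
  have "(PI * M) $$ (i,j) = (\<Sum>k<NN. PI $$ (i,k) * M $$ (k,j))"
    using assms by (intro mult_entry[OF PIc assms(1)]) auto
  also have "\<dots> = (\<Sum>k<NN. (if k = i then M $$ (k,j) else 0) - (1 / real NN) * M $$ (k,j))"
    by (rule sum.cong) (use assms in \<open>auto simp: algebra_simps\<close>)
  also have "\<dots> = M $$ (i,j) - (1 / real NN) * (\<Sum>k<NN. M $$ (k,j))"
    using assms by (simp add: sum_subtractf sum.delta sum_distrib_left)
  finally show ?thesis .
qed

lemma PI_rowsum: "i < NN \<Longrightarrow> (\<Sum>k<NN. PI $$ (i,k)) = 0"
proof -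
  assume i: "i < NN"
  have "(\<Sum>k<NN. PI $$ (i,k)) = (\<Sum>k<NN. (if k = i then 1 else 0) - 1 / real NN)"
    by (rule sum.cong) (use i in auto)
  also have "\<dots> = 0" using i by (simp add: sum_subtractf sum.delta)
  finally show ?thesis .
qed

lemma PI_colsum: "j < NN \<Longrightarrow> (\<Sum>k<NN. PI $$ (k,j)) = 0"
proof -
  assume j: "j < NN"
  have "(\<Sum>k<NN. PI $$ (k,j)) = (\<Sum>k<NN. (if k = j then 1 else 0) - 1 / real NN)"
    by (rule sum.cong) (use j in auto)
  also have "\<dots> = 0" using j by (simp add: sum_subtractf sum.delta)
  finally show ?thesis .
qed

lemma PP_rowsum: "i < NN \<Longrightarrow> (\<Sum>k<NN. PP $$ (i,k)) = 0"
proof -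
  assume i: "i < NN"
  have "(\<Sum>k<NN. PP $$ (i,k)) = (\<Sum>k<NN. (if k = i then 1 else 0) - (if k = 0 then 1 else 0))"
    by (rule sum.cong) (use i in auto)
  also have "\<dots> = 0" using i by (simp add: sum_subtractf sum.delta)
  finally show ?thesis .
qed

lemma Lt_colsum: "j < NN \<Longrightarrow> (\<Sum>k<NN. LL\<^sup>T $$ (k,j)) = 0"
proof -
  assume j: "j < NN"
  have "(\<Sum>k<NN. LL\<^sup>T $$ (k,j)) = (\<Sum>k<NN. LL $$ (j,k))" by (rule sum.cong) (use j in auto)
  then show ?thesis using L_rowsum[OF j] by simp
qed

lemma LPI: "LL * PI = LL"
proof (rule eq_matI)
  fix i j assume "i < dim_row (LL)" "j < dim_col (LL)"
  then have ij: "i < NN" "j < NN" by simp_all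
  show "(LL * PI) $$ (i,j) = (LL) $$ (i,j)" unfolding M_PI[OF L_carrier ij] L_rowsum[OF ij(1)] using ij by simp
qed simp_all

lemma PILt: "PI * LL\<^sup>T = LL\<^sup>T"
proof (rule eq_matI)
  fix i j assume "i < dim_row (LL\<^sup>T)" "j < dim_col (LL\<^sup>T)"
  then have ij: "i < NN" "j < NN" by simp_all
  show "(PI * LL\<^sup>T) $$ (i,j) = (LL\<^sup>T) $$ (i,j)" unfolding PI_M[OF Ltc ij] Lt_colsum[OF ij(2)] using ij by simp
qed simp_all

lemma PL: "PP * LL = LL"
proof (rule eq_matI)
  fix i j assume "i < dim_row (LL)" "j < dim_col (LL)"
  then have ij: "i < NN" "j < NN" by simp_all
  show "(PP * LL) $$ (i,j) = (LL) $$ (i,j)" unfolding P_M[OF L_carrier ij] L_row0[OF ij(2)] using ij by simp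
qed simp_all

lemma LP: "LL * PP = LL"
proof (rule eq_matI)
  fix i j assume "i < dim_row (LL)" "j < dim_col (LL)"
  then have ij: "i < NN" "j < NN" by simp_all
  show "(LL * PP) $$ (i,j) = (LL) $$ (i,j)" unfolding M_P[OF L_carrier ij] L_rowsum[OF ij(1)] using ij by simp
qed simp_all

lemma PPI: "PP * PI = PP"
proof (rule eq_matI)
  fix i j assume "i < dim_row (PP)" "j < dim_col (PP)"
  then have ij: "i < NN" "j < NN" by simp_all
  show "(PP * PI) $$ (i,j) = (PP) $$ (i,j)" unfolding M_PI[OF PPc ij] PP_rowsum[OF ij(1)] using ij by simp
qed simp_all

lemma PIP: "PI * PP = PI"
proof (rule eq_matI)
  fix i j assume "i < dim_row (PI)" "j < dim_col (PI)"
  then have ij: "i < NN" "j < NN" by simp_all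
  show "(PI * PP) $$ (i,j) = (PI) $$ (i,j)" unfolding M_P[OF PIc ij] PI_rowsum[OF ij(1)] using ij by simp
qed simp_all

lemma PIPt: "PI * PP\<^sup>T = PP\<^sup>T"
proof (rule eq_matI)
  fix i j assume "i < dim_row (PP\<^sup>T)" "j < dim_col (PP\<^sup>T)"
  then have ij: "i < NN" "j < NN" by simp_all
  show "(PI * PP\<^sup>T) $$ (i,j) = (PP\<^sup>T) $$ (i,j)" unfolding M_Pt[OF PIc ij] using ij by simp
qed simp_all

lemma PtPI: "PP\<^sup>T * PI = PI"
proof (rule eq_matI)
  fix i j assume "i < dim_row (PI)" "j < dim_col (PI)"
  then have ij: "i < NN" "j < NN" by simp_all
  show "(PP\<^sup>T * PI) $$ (i,j) = (PI) $$ (i,j)" unfolding Pt_M[OF PIc ij] PI_colsum[OF ij(2)] using ij by simp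
qed simp_all

lemma PPt: "PP * PP\<^sup>T = BB"
proof (rule eq_matI)
  fix i j assume "i < dim_row (BB)" "j < dim_col (BB)"
  then have ij: "i < NN" "j < NN" by simp_all
  show "(PP * PP\<^sup>T) $$ (i,j) = (BB) $$ (i,j)" unfolding M_Pt[OF PPc ij] using ij by simp
qed simp_all

lemma LtPt: "LL\<^sup>T * PP\<^sup>T = LL\<^sup>T"
proof (rule eq_matI)
  fix i j assume "i < dim_row (LL\<^sup>T)" "j < dim_col (LL\<^sup>T)"
  then have ij: "i < NN" "j < NN" by simp_all
  show "(LL\<^sup>T * PP\<^sup>T) $$ (i,j) = (LL\<^sup>T) $$ (i,j)" unfolding M_Pt[OF Ltc ij] using ij L_row0[of i] by simp
qed simp_all

lemma PtLt: "PP\<^sup>T * LL\<^sup>T = LL\<^sup>T"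
proof (rule eq_matI)
  fix i j assume "i < dim_row (LL\<^sup>T)" "j < dim_col (LL\<^sup>T)"
  then have ij: "i < NN" "j < NN" by simp_all
  show "(PP\<^sup>T * LL\<^sup>T) $$ (i,j) = (LL\<^sup>T) $$ (i,j)" unfolding Pt_M[OF Ltc ij] Lt_colsum[OF ij(2)] using ij by simp
qed simp_all

lemma WL: "LL * WW + WW * LL\<^sup>T = BB"
proof (rule eq_matI)
  fix i j assume ij: "i < dim_row BB" "j < dim_col BB"
  then have ij': "i < NN" "j < NN" by auto
  have sp: "(LL * WW + WW * LL\<^sup>T) $$ (i, j) = (LL * WW) $$ (i,j) + (WW * LL\<^sup>T) $$ (i,j)"
    by (rule index_add_mat(1)) (use ij' in simp_all)
  show "(LL * WW + WW * LL\<^sup>T) $$ (i, j) = BB $$ (i, j)"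
  proof (cases "1 \<le> i \<and> 1 \<le> j")
    case True
    then show ?thesis unfolding sp LZ[OF WWc ij'] ZLt[OF WWc ij'] using ij' Wv_rec[of i j n] par_ltN[of i] par_ltN[of j] by simp
  next
    case False
    then have "i = 0 \<or> j = 0" by auto
    then show ?thesis unfolding sp LZ[OF WWc ij'] ZLt[OF WWc ij'] using ij' par_ltN[of i] par_ltN[of j] by auto
  qed
qed auto

lemma Z_unique:
  assumes Zc: "Z \<in> carrier_mat NN NN" and Ze: "LL * Z + Z * LL\<^sup>T = BB"
    and Z0: "\<And>j. j < NN \<Longrightarrow> Z $$ (0,j) = 0" "\<And>i. i < NN \<Longrightarrow> Z $$ (i,0) = 0"
  shows "Z = WW"
proof -
  have rec: "2 * Z $$ (i,j) - Z $$ (par n i, j) - Z $$ (i, par n j) = 1 + (if i = j then 1 else 0)"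
    if "1 \<le> i" "1 \<le> j" "i < NN" "j < NN" for i j
  proof -
    have ij': "i < NN" "j < NN" using that by auto
    have "(LL * Z + Z * LL\<^sup>T) $$ (i,j) = BB $$ (i,j)" using Ze by simp
    then have "(LL * Z) $$ (i,j) + (Z * LL\<^sup>T) $$ (i,j) = BB $$ (i,j)" using Zc ij' by simp
    then show ?thesis unfolding LZ[OF Zc ij'] ZLt[OF Zc ij'] using that by simp
  qed
  have main: "\<forall>i j. i < NN \<longrightarrow> j < NN \<longrightarrow> dep n i + dep n j = s \<longrightarrow> Z $$ (i,j) = Wv n i j" for s
  proof (induction s rule: less_induct)
    case (less s)
    show ?case
    proof (intro allI impI)
      fix i j assume ij: "i < NN" "j < NN" "dep n i + dep n j = s"
      show "Z $$ (i,j) = Wv n i j"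
      proof (cases "i = 0 \<or> j = 0")
        case True then show ?thesis using Z0 ij by auto
      next
        case False
        then have i1: "1 \<le> i" and j1: "1 \<le> j" by auto
        have d1: "1 \<le> dep n i" "1 \<le> dep n j" using dep_pos i1 j1 by auto
        have "Z $$ (par n i, j) = Wv n (par n i) j"
          using less.IH[of "dep n (par n i) + dep n j"] ij d1 par_ltN[of i] dep_par[OF i1, of n] by auto
        moreover have "Z $$ (i, par n j) = Wv n i (par n j)"
          using less.IH[of "dep n i + dep n (par n j)"] ij d1 par_ltN[of j] dep_par[OF j1, of n] by auto
        ultimately show ?thesis using rec[OF i1 j1 ij(1,2)] Wv_rec[OF i1 j1, of n] by linarith
      qed
    qed
  qed
  show ?thesis
  proof (rule eq_matI)
    fix i j assume "i < dim_row WW" "j < dim_col WW"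
    then show "Z $$ (i,j) = WW $$ (i,j)" using main by simp
  qed (use Zc in auto)
qed


lemma res_main: "r n m = 2 * real n + 2 * real m - 2 * Ff n m"
proof -
  define Q where "Q = proj_Q NN"
  have QP: "Q \<in> carrier_mat (NN - 1) NN \<and> Q *\<^sub>v vec NN (\<lambda>_. 1) = 0\<^sub>v (NN - 1)
      \<and> Q * Q\<^sup>T = 1\<^sub>m (NN - 1) \<and> Q\<^sup>T * Q = PI"
    unfolding Q_def by (rule proj_Q_props) simp
  then have Qc: "Q \<in> carrier_mat (NN - 1) NN" and Q1: "Q *\<^sub>v vec NN (\<lambda>_. 1) = 0\<^sub>v (NN - 1)"
    and QQt: "Q * Q\<^sup>T = 1\<^sub>m (NN - 1)" and QtQ: "Q\<^sup>T * Q = PI" by auto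
  have Qdim[simp]: "dim_row Q = NN - 1" "dim_col Q = NN" using Qc by auto
  have Qtc: "Q\<^sup>T \<in> carrier_mat NN (NN - 1)" by (intro carrier_matI) simp_all
  have Qrow: "(\<Sum>k<NN. Q $$ (i,k)) = 0" if i: "i < NN - 1" for i
  proof -
    have "(Q *\<^sub>v vec NN (\<lambda>_. 1)) $ i = 0" using Q1 i by simp
    moreover have "(Q *\<^sub>v vec NN (\<lambda>_. 1)) $ i = (\<Sum>k<NN. Q $$ (i,k))"
      using i by (simp add: scalar_prod_def lessThan_atLeast0)
    ultimately show ?thesis by simp
  qed
  have QPP: "Q * PP = Q"
  proof (rule eq_matI)
    fix i j assume "i < dim_row Q" "j < dim_col Q"
    then have ij: "i < NN - 1" "j < NN" by simp_all
    show "(Q * PP) $$ (i,j) = Q $$ (i,j)" unfolding M_P[OF Qc ij] using Qrow[OF ij(1)] by simp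
  qed simp_all
  have PIQt: "PI * Q\<^sup>T = Q\<^sup>T"
  proof -
    have "PI * Q\<^sup>T = Q\<^sup>T * (Q * Q\<^sup>T)" unfolding QtQ[symmetric] by (simp add: assoc')
    then show ?thesis unfolding QQt by simp
  qed
  have QPI: "Q * PI = Q"
  proof -
    have "Q * PI = (Q * Q\<^sup>T) * Q" unfolding QtQ[symmetric] by (simp add: assoc')
    then show ?thesis unfolding QQt by simp
  qed
  have PtQt: "PP\<^sup>T * Q\<^sup>T = Q\<^sup>T"
  proof -
    have "PP\<^sup>T * Q\<^sup>T = (Q * PP)\<^sup>T" by (simp add: transpose_mult')
    then show ?thesis unfolding QPP by simp
  qed
  define Lb where "Lb = Q * LL * Q\<^sup>T"
  define S0 where "S0 = Q * WW * Q\<^sup>T"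
  have Lbdim[simp]: "dim_row Lb = NN - 1" "dim_col Lb = NN - 1" unfolding Lb_def by simp_all
  have LbT: "Lb\<^sup>T = Q * LL\<^sup>T * Q\<^sup>T" unfolding Lb_def by (simp add: transpose_mult' assoc')
  have S0c: "S0 \<in> carrier_mat (NN - 1) (NN - 1)" unfolding S0_def by (intro carrier_matI) simp_all
  have sol: "Lb * S0 + S0 * Lb\<^sup>T = 1\<^sub>m (NN - 1)"
  proof -
    have e1: "Lb * S0 = Q * (LL * (Q\<^sup>T * Q)) * WW * Q\<^sup>T" unfolding Lb_def S0_def by (simp add: assoc')
    have e2: "S0 * Lb\<^sup>T = Q * WW * ((Q\<^sup>T * Q) * LL\<^sup>T) * Q\<^sup>T" unfolding LbT S0_def by (simp add: assoc')
    have e3: "Q * LL * WW * Q\<^sup>T + Q * WW * LL\<^sup>T * Q\<^sup>T = Q * (LL * WW + WW * LL\<^sup>T) * Q\<^sup>T"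
      by (simp add: assoc' distl' distr')
    have e4: "Q * (PP * PP\<^sup>T) * Q\<^sup>T = (Q * PP) * (PP\<^sup>T * Q\<^sup>T)" by (simp add: assoc')
    have "Lb * S0 + S0 * Lb\<^sup>T = Q * LL * WW * Q\<^sup>T + Q * WW * LL\<^sup>T * Q\<^sup>T"
      unfolding e1 e2 QtQ LPI PILt ..
    also have "\<dots> = Q * (PP * PP\<^sup>T) * Q\<^sup>T" unfolding e3 WL PPt ..
    also have "\<dots> = 1\<^sub>m (NN - 1)" unfolding e4 QPP PtQt QQt ..
    finally show ?thesis .
  qed
  have uniq: "S = S0" if Sc: "S \<in> carrier_mat (NN - 1) (NN - 1)" and Se: "Lb * S + S * Lb\<^sup>T = 1\<^sub>m (NN - 1)" for S
  proof -
    have Sdim[simp]: "dim_row S = NN - 1" "dim_col S = NN - 1" using Sc by auto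
    define E where "E = Q\<^sup>T * S * Q"
    have Edim[simp]: "dim_row E = NN" "dim_col E = NN" unfolding E_def by simp_all
    have Ec: "E \<in> carrier_mat NN NN" by (intro carrier_matI) simp_all
    have a: "PI * LL * E + E * LL\<^sup>T * PI = PI"
    proof -
      have "(Q\<^sup>T * Q) * LL * (Q\<^sup>T * S * Q) + (Q\<^sup>T * S * Q) * LL\<^sup>T * (Q\<^sup>T * Q) = Q\<^sup>T * (Lb * S + S * Lb\<^sup>T) * Q"
        unfolding LbT unfolding Lb_def by (simp add: assoc' distl' distr')
      also have "\<dots> = Q\<^sup>T * Q" unfolding Se by simp
      finally show ?thesis unfolding QtQ E_def .
    qed
    define Z where "Z = PP * E * PP\<^sup>T"
    have Zdim[simp]: "dim_row Z = NN" "dim_col Z = NN" unfolding Z_def by simp_all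
    have Zc: "Z \<in> carrier_mat NN NN" by (intro carrier_matI) simp_all
    have b: "LL * Z + Z * LL\<^sup>T = BB"
    proof -
      have h1: "LL * Z = (LL * PP) * E * PP\<^sup>T" unfolding Z_def by (simp add: assoc')
      have h2: "Z * LL\<^sup>T = PP * E * (PP\<^sup>T * LL\<^sup>T)" unfolding Z_def by (simp add: assoc')
      have h3: "PP * (PI * LL * E + E * LL\<^sup>T * PI) * PP\<^sup>T = (PP * PI) * LL * E * PP\<^sup>T + PP * E * (LL\<^sup>T * (PI * PP\<^sup>T))"
        by (simp add: assoc' distl' distr')
      have h4: "PP * PI * PP\<^sup>T = (PP * PI) * PP\<^sup>T" by simp
      have "LL * Z + Z * LL\<^sup>T = LL * E * PP\<^sup>T + PP * E * LL\<^sup>T" unfolding h1 h2 LP PtLt ..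
      also have "\<dots> = PP * (PI * LL * E + E * LL\<^sup>T * PI) * PP\<^sup>T" unfolding h3 PPI PL PIPt LtPt ..
      also have "\<dots> = BB" unfolding a PPI PPt ..
      finally show ?thesis .
    qed
    have PE: "PP * E \<in> carrier_mat NN NN" by (intro carrier_matI) simp_all
    have z1: "Z $$ (0,j) = 0" if "j < NN" for j
    proof -
      have e1: "Z $$ (0,j) = (PP * E) $$ (0,j) - (PP * E) $$ (0,0)" unfolding Z_def by (rule M_Pt[OF PE]) (use that in simp_all)
      have z0: "0 < NN" by simp
      have "(PP * E) $$ (0,j) - (PP * E) $$ (0,0) = 0" unfolding P_M[OF Ec z0 that] P_M[OF Ec z0 z0] by simp
      then show ?thesis using e1 by simp
    qed
    have z2: "Z $$ (i,0) = 0" if "i < NN" for i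
      unfolding Z_def using M_Pt[OF PE that, of 0] by simp
    have ZW: "Z = WW" by (rule Z_unique[OF Zc b z1 z2])
    have "E = PI * E * PI"
    proof -
      have "PI * E * PI = (PI * Q\<^sup>T) * S * (Q * PI)" unfolding E_def by (simp add: assoc')
      then show ?thesis unfolding PIQt QPI E_def by simp
    qed
    also have "PI * E * PI = (PI * PP) * E * (PP\<^sup>T * PI)" unfolding PIP PtPI by (rule refl)
    also have "\<dots> = PI * Z * PI" unfolding Z_def by (simp add: assoc')
    finally have EW: "E = PI * WW * PI" unfolding ZW .
    have "S = (Q * Q\<^sup>T) * S * (Q * Q\<^sup>T)" unfolding QQt by simp
    also have "\<dots> = Q * E * Q\<^sup>T" unfolding E_def by (simp add: assoc')
    also have "\<dots> = (Q * PI) * WW * (PI * Q\<^sup>T)" unfolding EW by (simp add: assoc')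
    also have "\<dots> = S0" unfolding QPI PIQt S0_def ..
    finally show ?thesis .
  qed
  have sig: "lyap_Sigma Lb = S0"
    unfolding lyap_Sigma_def Lbdim
  proof (rule the_equality)
    show "S0 \<in> carrier_mat (NN - 1) (NN - 1) \<and> Lb * S0 + S0 * Lb\<^sup>T = 1\<^sub>m (NN - 1)" using S0c sol by simp
  next
    fix S assume "S \<in> carrier_mat (NN - 1) (NN - 1) \<and> Lb * S + S * Lb\<^sup>T = 1\<^sub>m (NN - 1)"
    then show "S = S0" using uniq by auto
  qed
  have X: "resistance_X (tree_adj n m) = 2 \<cdot>\<^sub>m (PI * WW * PI)"
  proof -
    have "resistance_X (tree_adj n m) = 2 \<cdot>\<^sub>m (Q\<^sup>T * S0 * Q)"
      unfolding resistance_X_def Let_def adj_dim Q_def[symmetric] Lb_def[symmetric] sig ..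
    also have "Q\<^sup>T * S0 * Q = (Q\<^sup>T * Q) * WW * (Q\<^sup>T * Q)" unfolding S0_def by (simp add: assoc')
    finally show ?thesis unfolding QtQ .
  qed
  define rs where "rs i = (\<Sum>k<NN. Wv n i k)" for i
  define C where "C = (\<Sum>k<NN. rs k)"
  have PWc: "PI * WW \<in> carrier_mat NN NN" by (intro carrier_matI) simp_all
  have Xe: "(PI * WW * PI) $$ (i,j) = Wv n i j - (1 / real NN) * rs j - (1 / real NN) * (rs i - (1 / real NN) * C)"
    if ij: "i < NN" "j < NN" for i j
  proof -
    have pw: "(PI * WW) $$ (i',k) = Wv n i' k - (1 / real NN) * rs k" if "i' < NN" "k < NN" for i' k
    proof -
      have "(\<Sum>l<NN. WW $$ (l,k)) = rs k" unfolding rs_def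
        by (rule sum.cong) (use that in \<open>auto simp: Wv_sym[of n _ k]\<close>)
      then show ?thesis unfolding PI_M[OF WWc that] using that by simp
    qed
    have "(\<Sum>k<NN. (PI * WW) $$ (i,k)) = (\<Sum>k<NN. Wv n i k - (1 / real NN) * rs k)"
      by (rule sum.cong) (use ij pw in auto)
    also have "\<dots> = rs i - (1 / real NN) * C" unfolding rs_def C_def by (simp add: sum_subtractf sum_distrib_left)
    finally have "(\<Sum>k<NN. (PI * WW) $$ (i,k)) = rs i - (1 / real NN) * C" .
    then show ?thesis unfolding M_PI[OF PWc ij] pw[OF ij] by simp
  qed
  have nN: "n < NN" and bN: "n + m < NN" by simp_all
  have w1: "Wv n n n = real n" by (simp add: Wv_def Wf_def dep_def)
  have w2: "Wv n (n+m) (n+m) = real m" using m1 by (simp add: Wv_def Wf_def dep_def)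
  have w3: "Wv n n (n+m) = Ff n m / 2" using m1 by (simp add: Wv_def Wf_def dep_def)
  have "r n m = 2 * (PI * WW * PI) $$ (n,n) + 2 * (PI * WW * PI) $$ (n+m,n+m) - 2 * (2 * (PI * WW * PI) $$ (n,n+m))"
    unfolding r_def eff_res_def Let_def X using nN bN by simp
  also have "\<dots> = 2 * real n + 2 * real m - 2 * Ff n m"
    unfolding Xe[OF nN nN] Xe[OF bN bN] Xe[OF nN bN] w1 w2 w3 by (simp add: algebra_simps)
  finally show ?thesis .
qed

end

declare sum.lessThan_Suc[simp]


lemma gen_sum: "(\<Sum>k\<in>K. (a - b * g k) * (c + 2 * real k - 2 * h k)) =
   a * (c * card K + 2 * (\<Sum>k\<in>K. real k) - 2 * (\<Sum>k\<in>K. h k))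
   - b * (c * (\<Sum>k\<in>K. g k) + 2 * (\<Sum>k\<in>K. real k * g k) - 2 * (\<Sum>k\<in>K. g k * h k))"
proof -
  have "(\<Sum>k\<in>K. (a - b * g k) * (c + 2 * real k - 2 * h k)) =
     (\<Sum>k\<in>K. a * c + (2 * a) * real k - (2 * a) * h k - (b * c) * g k - (2 * b) * (real k * g k) + (2 * b) * (g k * h k))"
    by (rule sum.cong) (auto simp: algebra_simps)
  also have "\<dots> = a * c * card K + (2 * a) * (\<Sum>k\<in>K. real k) - (2 * a) * (\<Sum>k\<in>K. h k) - (b * c) * (\<Sum>k\<in>K. g k)
      - (2 * b) * (\<Sum>k\<in>K. real k * g k) + (2 * b) * (\<Sum>k\<in>K. g k * h k)"
    by (simp add: sum.distrib sum_subtractf sum_distrib_left)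
  finally show ?thesis by (simp add: algebra_simps)
qed

lemma shiftS: "(\<Sum>j=1..l. f (Suc j)) = (\<Sum>j=1..Suc l. f j) - (f 1 :: real)"
  by (induction l) auto

lemma p_diff: "(2::real) powr (real k - real l) = 2^k / 2^l"
  by (simp add: powr_diff powr_realpow)

lemma p_diff1: "(2::real) powr (1 + real k - real n) = 2 * 2^k / 2^n"
  by (simp add: powr_diff powr_add powr_realpow)

lemma p_neg: "(2::real) powr (- real n) = 1 / 2^n"
  by (simp add: powr_minus_divide powr_realpow)

lemma lemma7_alg:
  fixes n l :: nat
  assumes "n \<ge> 1" and "l \<ge> 1"
  and hr: "\<And>a b. a \<ge> 1 \<Longrightarrow> b \<ge> 1 \<Longrightarrow> r a b = 2 * real a + 2 * real b - 2 * Ff a b"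
  shows "r n (l + 1) =
      (- 3 * real n ^ 2 + 3 * real l ^ 2 - 2 * real n * real l - real n + 5 * real l + 2)
        / (2 * (real n + real l + 1) ^ 2)
    + (real l ^ 2 + 2 * real n * real l + 2 * real n + 3 * real l) / (real n + real l + 1)
        * 2 powr (- real n)
    + (real n ^ 2 + real n + 2) / (2 * (real n + real l + 1)) * 2 powr (- real l)
    + 1 / (4 * (real n + real l + 1)) *
        (\<Sum>k = 1..l. (4 - 2 / (real n + real l + 1) - 2 powr (real k - real l)) * r n k)
    - (real n + real l + 2) / (2 * (real n + real l + 1)) *
        (\<Sum>k = 1..n. (1 / (real n + real l + 1) - 2 powr (real k - real n)) * r k l)
    - 1 / (4 * (real n + real l + 1)) *
        (\<Sum>k = 1..n. \<Sum>j = 1..l. (2 powr (1 + real k - real n) - 2 powr (real j - real l)) * r k j)"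
proof -
  define p :: real where "p = 2^n"
  define q :: real where "q = 2^l"
  define Nn where "Nn = real n + real l + 1"
  define T where "T = (\<Sum>k=1..l. Ff n k)"
  define F1 where "F1 = Ff n (Suc l)"
  define F2 where "F2 = Ff (Suc n) l"
  have pp: "p > 0" "q > 0" unfolding p_def q_def by auto
  have Np: "Nn > 0" unfolding Nn_def by simp
  have U: "(\<Sum>k=1..n. Ff k l) = 2 * real n * real l - T" using TU[where l=l and n=n] unfolding T_def by simp
  have sk: "(\<Sum>k\<in>{1..l}. real k) = real l * (real l + 1) / 2" by (rule ar1)
  have skn: "(\<Sum>k\<in>{1..n}. real k) = real n * (real n + 1) / 2" by (rule ar1)
  have A: "(\<Sum>k = 1..l. (4 - 2 / (real n + real l + 1) - 2 powr (real k - real l)) * r n k)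
     = (4 - 2 / Nn) * (2 * real n * real l + 2 * (real l * (real l + 1) / 2) - 2 * T)
       - (1/q) * (2 * real n * (2 * q - 2) + 2 * ((real l - 1) * (2 * q) + 2) - 2 * (2 * q * F2 - 4 * q + 4))"
  proof -
    have "(\<Sum>k = 1..l. (4 - 2 / (real n + real l + 1) - 2 powr (real k - real l)) * r n k)
      = (\<Sum>k\<in>{1..l}. ((4 - 2 / Nn) - (1/q) * 2^k) * (2 * real n + 2 * real k - 2 * Ff n k))"
      using assms by (intro sum.cong) (auto simp: p_diff hr q_def Nn_def)
    also have "\<dots> = (4 - 2 / Nn) * (2 * real n * real l + 2 * (real l * (real l + 1) / 2) - 2 * T)
       - (1/q) * (2 * real n * (2 ^ (l+1) - 2) + 2 * ((real l - 1) * 2^(l+1) + 2) - 2 * (2^(l+1) * Ff (Suc n) l - 2^(l+2) + 4))"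
      unfolding gen_sum using sk geo1[of l] geo2[of l] sumU[where a=n and b=l] unfolding T_def by simp
    finally show ?thesis unfolding q_def F2_def by simp
  qed
  have B: "(\<Sum>k = 1..n. (1 / (real n + real l + 1) - 2 powr (real k - real n)) * r k l)
     = (1 / Nn) * (2 * real l * real n + 2 * (real n * (real n + 1) / 2) - 2 * (2 * real n * real l - T))
       - (1/p) * (2 * real l * (2 * p - 2) + 2 * ((real n - 1) * (2 * p) + 2) - 2 * (2 * p * F1 - 4 * p + 4))"
  proof -
    have "(\<Sum>k = 1..n. (1 / (real n + real l + 1) - 2 powr (real k - real n)) * r k l)
      = (\<Sum>k\<in>{1..n}. ((1 / Nn) - (1/p) * 2^k) * (2 * real l + 2 * real k - 2 * Ff k l))"
      using assms by (intro sum.cong) (auto simp: p_diff hr p_def Nn_def)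
    also have "\<dots> = (1 / Nn) * (2 * real l * real n + 2 * (real n * (real n + 1) / 2) - 2 * (2 * real n * real l - T))
       - (1/p) * (2 * real l * (2 ^ (n+1) - 2) + 2 * ((real n - 1) * 2^(n+1) + 2) - 2 * (2^(n+1) * Ff n (Suc l) - 2^(n+2) + 4))"
      unfolding gen_sum using skn U geo1[of n] geo2[of n] sumU'[where a=n and b=l] by simp
    finally show ?thesis unfolding p_def F1_def by simp
  qed
  define D1 where "D1 = (\<Sum>k\<in>{1..n}. \<Sum>j\<in>{1..l}. 2^k * Ff k j)"
  define D2 where "D2 = (\<Sum>k\<in>{1..n}. \<Sum>j\<in>{1..l}. 2^j * Ff k j)"
  define D3 where "D3 = (\<Sum>k\<in>{1..n}. \<Sum>j\<in>{1..l}. (2::real)^k * (2 * real k + 2 * real j))"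
  define D4 where "D4 = (\<Sum>k\<in>{1..n}. \<Sum>j\<in>{1..l}. (2::real)^j * (2 * real k + 2 * real j))"
  have C: "(\<Sum>k = 1..n. \<Sum>j = 1..l. (2 powr (1 + real k - real n) - 2 powr (real j - real l)) * r k j)
     = (2/p) * (D3 - 2 * D1) - (1/q) * (D4 - 2 * D2)"
  proof -
    have "(\<Sum>k = 1..n. \<Sum>j = 1..l. (2 powr (1 + real k - real n) - 2 powr (real j - real l)) * r k j)
      = (\<Sum>k\<in>{1..n}. \<Sum>j\<in>{1..l}. (2/p) * (2^k * (2 * real k + 2 * real j) - 2 * (2^k * Ff k j))
            - (1/q) * (2^j * (2 * real k + 2 * real j) - 2 * (2^j * Ff k j)))"
      by (intro sum.cong refl) (auto simp: p_diff p_diff1 hr p_def q_def algebra_simps add_divide_distrib)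
    also have "\<dots> = (2/p) * (D3 - 2 * D1) - (1/q) * (D4 - 2 * D2)"
      unfolding D1_def D2_def D3_def D4_def
      by (simp add: sum_subtractf sum_distrib_left sum_divide_distrib diff_divide_distrib)
    finally show ?thesis .
  qed
  have Fn1: "Ff n 1 = 2 - 2 / p" unfolding p_def by (rule Ff_1')
  have F1l: "Ff 1 l = 2 - 2 / q" unfolding q_def by (rule Ff_1)
  have D1: "D1 = 2 * p * (T + F1 - (2 - 2 / p)) - real l * (4 * p - 4)"
  proof -
    have "D1 = (\<Sum>j\<in>{1..l}. \<Sum>k\<in>{1..n}. 2^k * Ff k j)" unfolding D1_def by (rule sum.swap)
    also have "\<dots> = (\<Sum>j\<in>{1..l}. 2 * p * Ff n (Suc j) - (4 * p - 4))"
    proof (intro sum.cong refl)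
      fix j show "(\<Sum>k\<in>{1..n}. 2^k * Ff k j) = 2 * p * Ff n (Suc j) - (4 * p - 4)"
        using sumU'[where a=n and b=j] unfolding p_def by simp
    qed
    also have "\<dots> = 2 * p * (\<Sum>j=1..l. Ff n (Suc j)) - real l * (4 * p - 4)"
      by (simp add: sum_subtractf sum_distrib_left)
    also have "(\<Sum>j=1..l. Ff n (Suc j)) = T + F1 - (2 - 2 / p)"
      using shiftS[of "Ff n" l] Fn1 unfolding T_def F1_def by simp
    finally show ?thesis .
  qed
  have D2: "D2 = 2 * q * ((2 * real n * real l - T) + F2 - (2 - 2 / q)) - real n * (4 * q - 4)"
  proof -
    have "D2 = (\<Sum>k\<in>{1..n}. 2 * q * Ff (Suc k) l - (4 * q - 4))"
      unfolding D2_def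
    proof (intro sum.cong refl)
      fix k show "(\<Sum>j\<in>{1..l}. 2^j * Ff k j) = 2 * q * Ff (Suc k) l - (4 * q - 4)"
        using sumU[where a=k and b=l] unfolding q_def by simp
    qed
    also have "\<dots> = 2 * q * (\<Sum>k=1..n. Ff (Suc k) l) - real n * (4 * q - 4)"
      by (simp add: sum_subtractf sum_distrib_left)
    also have "(\<Sum>k=1..n. Ff (Suc k) l) = (2 * real n * real l - T) + F2 - (2 - 2 / q)"
      using shiftS[of "\<lambda>k. Ff k l" n] F1l U unfolding F2_def by simp
    finally show ?thesis .
  qed
  have D3: "D3 = 2 * real l * ((real n - 1) * (2 * p) + 2) + real l * (real l + 1) * (2 * p - 2)"
  proof -
    have "D3 = (\<Sum>k\<in>{1..n}. (2 * real l) * (real k * 2^k) + (real l * (real l + 1)) * 2^k)"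
      unfolding D3_def
    proof (intro sum.cong refl)
      fix k
      have "(\<Sum>j\<in>{1..l}. (2::real)^k * (2 * real k + 2 * real j)) = 2^k * (2 * real k * real l + 2 * (\<Sum>j\<in>{1..l}. real j))"
        by (simp add: sum.distrib sum_distrib_left algebra_simps)
      then show "(\<Sum>j\<in>{1..l}. (2::real)^k * (2 * real k + 2 * real j)) = (2 * real l) * (real k * 2^k) + (real l * (real l + 1)) * 2^k"
        unfolding sk by (simp add: algebra_simps)
    qed
    also have "\<dots> = 2 * real l * (\<Sum>k=1..n. real k * 2^k) + real l * (real l + 1) * (\<Sum>k=1..n. 2^k)"
      by (simp add: sum.distrib sum_distrib_left)
    finally show ?thesis using geo1[of n] geo2[of n] unfolding p_def by simp
  qed
  have D4: "D4 = real n * (real n + 1) * (2 * q - 2) + 2 * real n * ((real l - 1) * (2 * q) + 2)"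
  proof -
    have "D4 = (\<Sum>k\<in>{1..n}. 2 * real k * (2 * q - 2) + 2 * ((real l - 1) * (2 * q) + 2))"
      unfolding D4_def
    proof (intro sum.cong refl)
      fix k
      have "(\<Sum>j\<in>{1..l}. (2::real)^j * (2 * real k + 2 * real j)) = 2 * real k * (\<Sum>j=1..l. 2^j) + 2 * (\<Sum>j=1..l. real j * 2^j)"
        by (simp add: sum.distrib sum_distrib_left algebra_simps)
      then show "(\<Sum>j\<in>{1..l}. (2::real)^j * (2 * real k + 2 * real j)) = 2 * real k * (2 * q - 2) + 2 * ((real l - 1) * (2 * q) + 2)"
        using geo1[of l] geo2[of l] unfolding q_def by simp
    qed
    also have "\<dots> = (\<Sum>k\<in>{1..n}. (2 * (2 * q - 2)) * real k) + (\<Sum>k\<in>{1..n}. 2 * ((real l - 1) * (2 * q) + 2))"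
      unfolding sum.distrib[symmetric] by (rule sum.cong) (auto simp: algebra_simps)
    also have "\<dots> = 2 * (2 * q - 2) * (\<Sum>k=1..n. real k) + real n * (2 * ((real l - 1) * (2 * q) + 2))"
      by (simp only: sum_distrib_left[symmetric]) simp
    finally show ?thesis unfolding skn by (simp add: field_simps)
  qed
  have L: "r n (l + 1) = 2 * real n + 2 * (real l + 1) - 2 * F1"
    using hr[of n "l+1"] assms unfolding F1_def by simp
  have pn: "2 powr (- real n) = 1 / p" "2 powr (- real l) = 1 / q"
    unfolding p_def q_def by (rule p_neg)+
  show ?thesis
    unfolding A B C D1 D2 D3 D4 L pn Nn_def
    by (rule final_alg[where x="real n" and y="real l" and s="real n + real l + 1"]) (use pp in auto)
qed

theorem lemma7:
  fixes n l :: nat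
  assumes "n \<ge> 1" and "l \<ge> 1"
  shows "r n (l + 1) =
      (- 3 * real n ^ 2 + 3 * real l ^ 2 - 2 * real n * real l - real n + 5 * real l + 2)
        / (2 * (real n + real l + 1) ^ 2)
    + (real l ^ 2 + 2 * real n * real l + 2 * real n + 3 * real l) / (real n + real l + 1)
        * 2 powr (- real n)
    + (real n ^ 2 + real n + 2) / (2 * (real n + real l + 1)) * 2 powr (- real l)
    + 1 / (4 * (real n + real l + 1)) *
        (\<Sum>k = 1..l. (4 - 2 / (real n + real l + 1) - 2 powr (real k - real l)) * r n k)
    - (real n + real l + 2) / (2 * (real n + real l + 1)) *
        (\<Sum>k = 1..n. (1 / (real n + real l + 1) - 2 powr (real k - real n)) * r k l)
    - 1 / (4 * (real n + real l + 1)) *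
        (\<Sum>k = 1..n. \<Sum>j = 1..l. (2 powr (1 + real k - real n) - 2 powr (real j - real l)) * r k j)"
    by (rule lemma7_alg[OF assms]) (simp add: res_main)

end
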